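(* Assume (A1)–(A4), let $x_1\in R\mathbb{B}$, and run the Algorithm with $\eta>0$ and $\rho\in[0,\epsilon]$. Then for every $t\in[T]$ with $t<T$, $$\mathrm{dist}(x_{t+1},\mathcal{X}_\rho)\le\sqrt{\gamma}\,\mathrm{dist}(x_t,\mathcal{X}_\rho)+\eta G_f .$$ Consequently, for all such $t$, $$\mathrm{dist}(x_{t+1},\mathcal{X}_\rho)\le\gamma^{t/2}\,\mathrm{dist}(x_1,\mathcal{X}_\rho)+\frac{\eta G_f}{1-\sqrt{\gamma}} .$$
   Context: Let $d,T$ be positive integers and $[T]=\{1,\dots,T\}$. Write $\|\cdot\|$ for the Euclidean norm and $\mathbb{B}=\{x\in\mathbb{R}^d:\|x\|\le1\}$. For a closed convex set $\mathcal{Y}$, $\Pi_{\mathcal{Y}}$ is the Euclidean projection onto $\mathcal{Y}$ and $\mathrm{dist}(z,\mathcal{Y})=\min_{y\in\mathcal{Y}}\|z-y\|$. For $a\in\mathbb{R}$, $[a]_+=\max(a,0)$. Let $g:\mathbb{R}^d\to\mathbb{R}$ be convex with subdifferential $\partial g(x)$. Set $\mathcal{X}=\{x:g(x)\le0\}$, and for $\rho\ge0$ set $\mathcal{X}_\rho=\{x:g(x)\le-\rho\}$. Assumptions: (A1) there is $R>0$ with $\mathcal{X}\subseteq R\mathbb{B}$; (A2) $f_1,\dots,f_T:\mathbb{R}^d\to\mathbb{R}$ are convex and differentiable, and there is $G_f>0$ with $\|\nabla f_t(x)\|\le G_f$ for all $x\in R\mathbb{B}$ and all $t\in[T]$; (A3)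 there is $G_g>0$ with $\|s\|\le G_g$ for all $s\in\partial g(x)$ and all $x\in R\mathbb{B}$; (A4) there are $\sigma,\epsilon>0$ such that $\mathcal{X}'=\{x:g(x)=-\epsilon\}$ is nonempty and $\|s\|\ge\sigma$ for all $s\in\partial g(x)$ and all $x\in\mathcal{X}'$. Algorithm (OGD with Polyak feasibility steps). Inputs are $x_1\in\mathbb{R}^d$, $\eta>0$ and $\rho\ge0$. For $t=1,\dots,T$: - play $x_t$ and then receive $f_t$; the functions may be chosen adversarially and may depend on past actions; - query $g_t=g(x_t)$ and some $s_t\in\partial g(x_t)$; - set $y_t=x_t-\eta\nabla f_t(x_t)$; - if $s_t\ne0$, set $x_{t+1}=\Pi_{R\mathbb{B}}\big(y_t-\frac{[g_t+s_t^\top(y_t-x_t)+\rho]_+}{\|s_t\|^2}s_t\big)$; if $s_t=0$, set $x_{t+1}=\Pi_{R\mathbb{B}}(y_t)$. Also $\gamma=1-\sigma^2/G_g^2$. *)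

theory Defs
  imports "HOL-Analysis.Analysis"
begin

definition subdiff :: "('a::real_inner \<Rightarrow> real) \<Rightarrow> 'a \<Rightarrow> 'a set" where
  "subdiff g x = {s. \<forall>y. g y \<ge> g x + inner s (y - x)}"

definition polyak_step ::
  "real \<Rightarrow> real \<Rightarrow> real \<Rightarrow> ('a::euclidean_space \<Rightarrow> real) \<Rightarrow> 'a \<Rightarrow> 'a \<Rightarrow> 'a \<Rightarrow> 'a" where
  "polyak_step R eta rho g s grad xt =
     (let y = xt - eta *\<^sub>R grad in
      if s \<noteq> 0
      then closest_point (cball 0 R)
             (y - (max (g xt + inner s (y - xt) + rho) 0 / (norm s)\<^sup>2) *\<^sub>R s)
      else closest_point (cball 0 R) y)"

end

theory Submission
  imports Defs
begin


lemma sublevel_closed: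
  fixes g :: "'a::euclidean_space \<Rightarrow> real"
  assumes "convex_on UNIV g" shows "closed {z. g z \<le> c}"
  using closed_Collect_le[OF convex_on_continuous[OF open_UNIV assms] continuous_on_const] .

lemma sublevel_convex:
  fixes g :: "'a::euclidean_space \<Rightarrow> real"
  assumes "convex_on UNIV g" shows "convex {z. g z \<le> c}"
proof (rule convexI)
  fix x y :: 'a and u v :: real
  assume xy: "x \<in> {z. g z \<le> c}" "y \<in> {z. g z \<le> c}" and uv: "0 \<le> u" "0 \<le> v" "u + v = 1"
  have "g (u *\<^sub>R x + v *\<^sub>R y) \<le> u * g x + v * g y"
  proof -
    have u: "u = 1 - v" using uv by simp
    show ?thesis using convex_onD[OF assms, of v x y] uv unfolding u by simp
  qed
  also have "\<dots> \<le> u * c + v * c"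
    using xy uv by (intro add_mono mult_left_mono) auto
  also have "u * c + v * c = (u + v) * c" by (simp add: algebra_simps)
  also have "\<dots> = c" using uv by simp
  finally show "u *\<^sub>R x + v *\<^sub>R y \<in> {z. g z \<le> c}" by simp
qed

lemma Q_nonexp:
  fixes s :: "'a::euclidean_space"
  assumes "s \<noteq> 0"
  shows "norm ((v1 - (max (c + inner s (v1 - x) + r) 0 / (norm s)\<^sup>2) *\<^sub>R s)
             - (v2 - (max (c + inner s (v2 - x) + r) 0 / (norm s)\<^sup>2) *\<^sub>R s)) \<le> norm (v1 - v2)"
proof -
  define a1 where "a1 = c + inner s (v1 - x) + r"
  define a2 where "a2 = c + inner s (v2 - x) + r"
  define N where "N = inner s s"
  have N: "N > 0" using assms by (simp add: N_def)
  define k where "k = (max a1 0 - max a2 0) / N"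
  have ns: "(norm s)\<^sup>2 = N" by (simp add: N_def power2_norm_eq_inner)
  have eq: "(v1 - (max a1 0 / (norm s)\<^sup>2) *\<^sub>R s) - (v2 - (max a2 0 / (norm s)\<^sup>2) *\<^sub>R s)
      = (v1 - v2) - k *\<^sub>R s"
    by (simp add: ns k_def diff_divide_distrib algebra_simps)
  have sd: "inner s (v1 - v2) = a1 - a2" by (simp add: a1_def a2_def inner_diff_right)
  have key: "(max a1 0 - max a2 0) * ((max a1 0 - max a2 0) - 2 * (a1 - a2)) \<le> 0"
    by (cases "a1 \<le> 0"; cases "a2 \<le> 0") (auto simp: max_def mult_nonneg_nonpos mult_nonpos_nonneg
          intro: mult_nonpos_nonneg mult_nonneg_nonpos, (smt (verit) mult_nonneg_nonpos mult_nonpos_nonneg)+)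
  have "inner ((v1 - v2) - k *\<^sub>R s) ((v1 - v2) - k *\<^sub>R s)
      = inner (v1 - v2) (v1 - v2) + k * (k * N - 2 * inner s (v1 - v2))"
    by (simp add: inner_diff_left inner_diff_right inner_commute N_def algebra_simps power2_eq_square)
  also have "k * (k * N - 2 * inner s (v1 - v2)) = (max a1 0 - max a2 0) * ((max a1 0 - max a2 0) - 2 * (a1 - a2)) / N"
    unfolding sd k_def using N by (simp add: field_simps)
  also have "\<dots> \<le> 0" using key N by (simp add: divide_nonpos_pos)
  finally show ?thesis unfolding a1_def[symmetric] a2_def[symmetric] eq
    by (simp add: norm_le)
qed



lemma key_sharp:
  fixes g :: "'a::euclidean_space \<Rightarrow> real"
  assumes cvx: "convex_on UNIV g" and ne: "{z. g z \<le> - e} \<noteq> {}" and w: "g w > - e"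
  obtains p v where "g p = - e" "v \<in> subdiff g p" "g w \<ge> - e + norm v * dist w p"
proof -
  define S where "S = {z. g z \<le> - e}"
  have clS: "closed S" and cvS: "convex S" unfolding S_def
    using sublevel_closed[OF cvx] sublevel_convex[OF cvx] by auto
  have neS: "S \<noteq> {}" using ne S_def by simp
  define p where "p = closest_point S w"
  have pS: "p \<in> S" unfolding p_def using closest_point_in_set[OF clS neS] .
  have pmin: "\<forall>z\<in>S. dist w p \<le> dist w z" unfolding p_def using closest_point_exists(2)[OF clS neS] .
  define d where "d = w - p"
  define a where "a = (\<lambda>z. inner d (z - p))"
  have aS: "a z \<le> 0" if "z \<in> S" for z
    using any_closest_point_dot[OF cvS clS pS that pmin] by (simp add: a_def d_def)
  have pos: "g z > - e" if "a z > 0" for z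
    using aS[of z] that by (force simp: S_def)
  have aw: "a w > 0"
  proof -
    have "w \<notin> S" using w by (simp add: S_def)
    hence "d \<noteq> 0" using pS by (auto simp: d_def)
    thus ?thesis by (simp add: a_def d_def[symmetric])
  qed
  have aff: "a ((1 - t) *\<^sub>R z + t *\<^sub>R y) = (1 - t) * a z + t * a y" for t z y
    by (simp add: a_def inner_diff_right inner_add_right algebra_simps)
  have zero: "g z \<ge> - e" if "a z = 0" for z
  proof (rule ccontr)
    assume "\<not> ?thesis"
    hence gz: "g z < - e" by simp
    define t where "t = (- e - g z) / (2 * (g w - g z))"
    have t0: "t > 0" and t1: "t \<le> 1/2" using gz w by (auto simp: t_def field_simps)
    define m where "m = (1 - t) *\<^sub>R z + t *\<^sub>R w"
    have "a m = t * a w" using aff that by (simp add: m_def)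
    hence "a m > 0" using t0 aw by simp
    hence gm: "g m > - e" by (rule pos)
    have "g m \<le> (1 - t) * g z + t * g w" unfolding m_def
      using convex_onD[OF cvx, of t z w] t0 t1 by simp
    also have "\<dots> = g z + t * (g w - g z)" by (simp add: algebra_simps)
    also have "t * (g w - g z) = (- e - g z) / 2" using gz w by (simp add: t_def field_simps)
    finally have "g m \<le> g z + (- e - g z) / 2" .
    thus False using gm gz by (simp add: field_simps)
  qed
  have gp: "g p = - e" using pS zero[of p] by (simp add: S_def a_def)
  have cross: "(g z + e) / a z \<le> (g z' + e) / a z'" if az: "a z < 0" and az': "a z' > 0" for z z'
  proof -
    define t where "t = a z' / (a z' - a z)"
    have t0: "t \<ge> 0" and t1: "t \<le> 1" using az az' by (auto simp: t_def field_simps)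
    define m where "m = (1 - t) *\<^sub>R z' + t *\<^sub>R z"
    have "a m = (1 - t) * a z' + t * a z" using aff by (simp add: m_def)
    also have "\<dots> = 0" using az az' by (simp add: t_def field_simps)
    finally have "g m \<ge> - e" by (rule zero)
    moreover have "g m \<le> (1 - t) * g z' + t * g z" unfolding m_def
      using convex_onD[OF cvx, of t z' z] t0 t1 by simp
    ultimately have "0 \<le> (1 - t) * (g z' + e) + t * (g z + e)" by (simp add: algebra_simps)
    hence "0 \<le> ((1 - t) * (g z' + e) + t * (g z + e)) * (a z' - a z)" using az az' by simp
    also have "\<dots> = ((1 - t) * (a z' - a z)) * (g z' + e) + (t * (a z' - a z)) * (g z + e)"
      by (simp add: algebra_simps)
    also have "(1 - t) * (a z' - a z) = - a z" using az az' by (simp add: t_def field_simps)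
    also have "t * (a z' - a z) = a z'" using az az' by (simp add: t_def field_simps)
    finally have "a z * (g z' + e) \<le> a z' * (g z + e)" by (simp add: algebra_simps)
    thus ?thesis using az az' by (simp add: divide_simps mult.commute)
  qed
  define A where "A = (\<lambda>z. (g z + e) / a z) ` {z. a z > 0}"
  define lam where "lam = Inf A"
  have Ane: "A \<noteq> {}" using aw by (auto simp: A_def)
  have Abdd: "bdd_below A" unfolding A_def
    by (rule bdd_belowI[of _ 0]) (use pos in \<open>force intro: divide_nonneg_pos\<close>)
  have lam0: "lam \<ge> 0" unfolding lam_def
    by (rule cInf_greatest[OF Ane]) (use pos in \<open>force simp: A_def intro: divide_nonneg_pos\<close>)
  have lamle: "lam \<le> (g z + e) / a z" if "a z > 0" for z
    unfolding lam_def by (rule cInf_lower[OF _ Abdd]) (use that in \<open>auto simp: A_def\<close>)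
  have lamge: "(g z + e) / a z \<le> lam" if "a z < 0" for z
    unfolding lam_def by (rule cInf_greatest[OF Ane]) (use cross that in \<open>auto simp: A_def\<close>)
  have sub: "g y \<ge> - e + lam * a y" for y
  proof (cases "a y" "0::real" rule: linorder_cases)
    case less
    thus ?thesis using lamge[OF less] by (simp add: divide_le_eq mult.commute)
  next
    case equal thus ?thesis using zero[of y] by simp
  next
    case greater
    thus ?thesis using lamle[OF greater] by (simp add: le_divide_eq mult.commute)
  qed
  have v: "lam *\<^sub>R d \<in> subdiff g p"
    unfolding subdiff_def using sub gp by (simp add: a_def)
  have "a w = (norm d)\<^sup>2" by (simp add: a_def d_def power2_norm_eq_inner)
  hence "norm (lam *\<^sub>R d) * dist w p = lam * a w" using lam0
    by (simp add: dist_norm d_def power2_eq_square)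
  hence "g w \<ge> - e + norm (lam *\<^sub>R d) * dist w p" using sub[of w] by simp
  thus ?thesis using that gp v by blast
qed



lemma error_bound:
  fixes g :: "'a::euclidean_space \<Rightarrow> real"
  assumes cvx: "convex_on UNIV g" and ne: "{z. g z \<le> - e} \<noteq> {}"
    and sig: "\<sigma> > 0" "\<And>z v. g z = - e \<Longrightarrow> v \<in> subdiff g z \<Longrightarrow> norm v \<ge> \<sigma>"
    and rho: "0 \<le> \<rho>" "\<rho> \<le> e" and w: "g w > - \<rho>"
  shows "infdist w {z. g z \<le> - \<rho>} \<le> (g w + \<rho>) / \<sigma>"
proof -
  have we: "g w > - e" using w rho by linarith
  obtain p v where gp: "g p = - e" and v: "v \<in> subdiff g p"
      and gw: "g w \<ge> - e + norm v * dist w p"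
    using key_sharp[OF cvx ne we] by blast
  have "\<sigma> \<le> norm v" using sig(2)[OF gp v] .
  hence "\<sigma> * dist w p \<le> norm v * dist w p" by (simp add: mult_right_mono)
  hence dp: "dist w p \<le> (g w + e) / \<sigma>" using gw sig(1) by (simp add: field_simps)
  define th where "th = (g w + \<rho>) / (g w + e)"
  have th0: "th \<ge> 0" "th \<le> 1" using w rho we by (auto simp: th_def field_simps)
  define q where "q = (1 - th) *\<^sub>R w + th *\<^sub>R p"
  have "g q \<le> (1 - th) * g w + th * g p"
    using convex_onD[OF cvx, of th w p] th0 by (simp add: q_def)
  also have "\<dots> = g w - th * (g w + e)" using gp by (simp add: algebra_simps)
  also have "th * (g w + e) = g w + \<rho>" using we by (simp add: th_def)
  also have "g w - (g w + \<rho>) = - \<rho>" by simp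
  finally have qX: "q \<in> {z. g z \<le> - \<rho>}" by simp
  have "w - q = th *\<^sub>R (w - p)" by (simp add: q_def algebra_simps)
  hence dq: "dist w q = th * dist w p" using th0 by (simp add: dist_norm)
  have "infdist w {z. g z \<le> - \<rho>} \<le> dist w q" by (rule infdist_le[OF qX])
  also have "\<dots> \<le> th * ((g w + e) / \<sigma>)" unfolding dq using mult_left_mono[OF dp th0(1)] by simp
  also have "\<dots> = (g w + \<rho>) / \<sigma>"
  proof -
    have "g w + e \<noteq> 0" using we by linarith
    thus ?thesis by (simp add: th_def)
  qed
  finally show ?thesis .
qed

lemma inner_exp:
  fixes u s :: "'a::real_inner"
  shows "inner (u - k *\<^sub>R s) (u - k *\<^sub>R s) = inner u u - 2 * k * inner s u + k\<^sup>2 * inner s s"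
  by (simp add: inner_diff_left inner_diff_right inner_commute power2_eq_square algebra_simps)

lemma sigma_le:
  fixes g :: "'a::euclidean_space \<Rightarrow> real"
  assumes cvx: "convex_on UNIV g" and ne: "{z. g z \<le> - e} \<noteq> {}" and e: "e > 0"
    and A1: "R > 0" "{z. g z \<le> 0} \<subseteq> cball 0 R"
    and A3: "\<And>z v. z \<in> cball 0 R \<Longrightarrow> v \<in> subdiff g z \<Longrightarrow> norm v \<le> Gg"
    and sig: "\<And>z v. g z = - e \<Longrightarrow> v \<in> subdiff g z \<Longrightarrow> norm v \<ge> \<sigma>"
  shows "\<sigma> \<le> Gg"
proof -
  obtain w :: 'a where nw: "norm w = R + 1" using vector_choose_size[of "R + 1"] A1 by auto
  have "w \<notin> cball 0 R" using nw by simp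
  hence "g w > 0" using A1(2) by force
  hence "g w > - e" using e by linarith
  then obtain p v where gp: "g p = - e" and v: "v \<in> subdiff g p"
    using key_sharp[OF cvx ne] by blast
  have "p \<in> cball 0 R" using A1(2) gp e by force
  thus ?thesis using A3[OF _ v] sig[OF gp v] by linarith
qed

lemma one_step:
  fixes g :: "'a::euclidean_space \<Rightarrow> real"
  assumes X'def: "X' = {z. g z \<le> - \<rho>}" and Xcl: "closed X'" and Xne: "X' \<noteq> {}"
    and Xsub: "X' \<subseteq> cball 0 R" and R: "R > 0"
    and s: "s \<in> subdiff g x" "norm s \<le> Gg" and grad: "norm grad \<le> Gf" and eta: "\<eta> > 0"
    and EB: "g x > - \<rho> \<Longrightarrow> infdist x X' \<le> (g x + \<rho>) / \<sigma>" and sig: "\<sigma> > 0" "\<sigma> \<le> Gg"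
  shows "infdist (polyak_step R \<eta> \<rho> g s grad x) X'
           \<le> sqrt (1 - \<sigma>\<^sup>2 / Gg\<^sup>2) * infdist x X' + \<eta> * Gf"
proof -
  define B where "B = cball (0::'a) R"
  have Bcl: "closed B" "convex B" "B \<noteq> {}" using R by (auto simp: B_def)
  define y where "y = x - \<eta> *\<^sub>R grad"
  define Q where "Q = (\<lambda>v. v - (max (g x + inner s (v - x) + \<rho>) 0 / (norm s)\<^sup>2) *\<^sub>R s)"
  define z where "z = (if s \<noteq> 0 then Q y else y)"
  have ps: "polyak_step R \<eta> \<rho> g s grad x = closest_point B z"
    by (simp add: polyak_step_def Let_def B_def z_def Q_def y_def)
  have proj: "infdist (closest_point B z) X' \<le> infdist z X'"
  proof -
    obtain p0 where p0: "p0 \<in> X'" "infdist z X' = dist z p0"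
      using infdist_attains_inf[OF Xcl Xne] by blast
    have "p0 \<in> B" using p0 Xsub by (auto simp: B_def)
    hence "dist (closest_point B z) p0 = dist (closest_point B z) (closest_point B p0)"
      by (simp add: closest_point_self)
    also have "\<dots> \<le> dist z p0" by (rule closest_point_lipschitz[OF Bcl(2,1,3)])
    finally show ?thesis using infdist_le[OF p0(1), of "closest_point B z"] p0(2) by linarith
  qed
  obtain p where p: "p \<in> X'" "infdist x X' = dist x p"
    using infdist_attains_inf[OF Xcl Xne] by blast
  define D where "D = dist x p"
  have gp: "g p \<le> - \<rho>" using p X'def by simp
  have subg: "g p \<ge> g x + inner s (p - x)" using s(1) by (simp add: subdiff_def)
  have Gg: "Gg > 0" using sig by linarith
  have gam0: "1 - \<sigma>\<^sup>2 / Gg\<^sup>2 \<ge> 0"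
    using sig Gg by (simp add: field_simps power_mono)
  have yx: "dist y x \<le> \<eta> * Gf"
    using grad eta by (simp add: y_def dist_norm mult_left_mono)
  have Gf: "Gf \<ge> 0" using grad norm_ge_zero order_trans by blast
  have sq0: "sqrt (1 - \<sigma>\<^sup>2 / Gg\<^sup>2) * infdist x X' \<ge> 0"
    using gam0 by (simp add: infdist_nonneg)
  have main: "infdist z X' \<le> sqrt (1 - \<sigma>\<^sup>2 / Gg\<^sup>2) * infdist x X' + \<eta> * Gf"
  proof (cases "s = 0")
    case True
    have "g x \<le> g p" using subg True by simp
    hence "x \<in> X'" using gp X'def by simp
    have "infdist z X' \<le> dist z x" by (rule infdist_le[OF \<open>x \<in> X'\<close>])
    also have "\<dots> \<le> \<eta> * Gf" using True yx by (simp add: z_def)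
    finally show ?thesis using sq0 by linarith
  next
    case False
    define N where "N = (norm s)\<^sup>2"
    have N: "N > 0" using False by (simp add: N_def)
    have NG: "N \<le> Gg\<^sup>2" using s(2) by (simp add: N_def power_mono)
    have QyQx: "dist (Q y) (Q x) \<le> \<eta> * Gf"
      using Q_nonexp[OF False, of y "g x" x \<rho> x] yx by (simp add: Q_def dist_norm)
    have Qxp: "dist (Q x) p \<le> sqrt (1 - \<sigma>\<^sup>2 / Gg\<^sup>2) * D"
    proof (cases "g x \<le> - \<rho>")
      case True
      hence "x \<in> X'" using X'def by simp
      hence D0: "D = 0" using p by (simp add: D_def)
      hence "p = x" by (simp add: D_def)
      moreover note D0
      moreover have "Q x = x" using True by (simp add: Q_def)
      ultimately show ?thesis by simp
    next
      case False
      define c where "c = g x + \<rho>"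
      have c: "c > 0" using False by (simp add: c_def)
      have Qx: "Q x = x - (c / N) *\<^sub>R s" using c by (simp add: Q_def c_def N_def)
      have sxp: "inner s (x - p) \<ge> c" using subg gp
        by (simp add: c_def inner_diff_right)
      have DB: "D \<le> c / \<sigma>" using EB False p by (simp add: c_def D_def)
      have D0: "D \<ge> 0" by (simp add: D_def)
      have "\<sigma> * D \<le> c" using DB sig(1) by (simp add: field_simps)
      hence sDc: "(\<sigma> * D)\<^sup>2 \<le> c\<^sup>2" using D0 sig(1) by (intro power_mono) auto
      have "(dist (Q x) p)\<^sup>2 = inner ((x - p) - (c / N) *\<^sub>R s) ((x - p) - (c / N) *\<^sub>R s)"
        by (simp add: Qx dist_norm power2_norm_eq_inner algebra_simps)
      also have "\<dots> = inner (x - p) (x - p) - 2 * (c / N) * inner s (x - p) + (c / N)\<^sup>2 * inner s s"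
        by (rule inner_exp)
      also have "\<dots> = D\<^sup>2 - 2 * (c / N) * inner s (x - p) + (c / N)\<^sup>2 * N"
        by (simp add: D_def dist_norm power2_norm_eq_inner N_def)
      also have "\<dots> \<le> D\<^sup>2 - 2 * (c / N) * c + (c / N)\<^sup>2 * N"
      proof -
        have "2 * (c / N) * c \<le> 2 * (c / N) * inner s (x - p)"
          using c N by (intro mult_left_mono[OF sxp]) auto
        thus ?thesis by linarith
      qed
      also have "\<dots> = D\<^sup>2 - c\<^sup>2 / N" using N by (simp add: field_simps power2_eq_square)
      also have "\<dots> \<le> D\<^sup>2 - c\<^sup>2 / Gg\<^sup>2"
        using N NG by (simp add: frac_le)
      also have "\<dots> \<le> D\<^sup>2 - (\<sigma> * D)\<^sup>2 / Gg\<^sup>2"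
        using sDc Gg by (simp add: divide_right_mono)
      also have "\<dots> = (1 - \<sigma>\<^sup>2 / Gg\<^sup>2) * D\<^sup>2"
        using Gg by (simp add: field_simps power_mult_distrib)
      finally have "(dist (Q x) p)\<^sup>2 \<le> (1 - \<sigma>\<^sup>2 / Gg\<^sup>2) * D\<^sup>2" .
      hence "sqrt ((dist (Q x) p)\<^sup>2) \<le> sqrt ((1 - \<sigma>\<^sup>2 / Gg\<^sup>2) * D\<^sup>2)"
        by (rule real_sqrt_le_mono)
      thus ?thesis using D0 by (simp add: real_sqrt_mult)
    qed
    have "infdist z X' \<le> dist (Q y) p" using infdist_le[OF p(1)] False by (simp add: z_def)
    also have "\<dots> \<le> dist (Q y) (Q x) + dist (Q x) p" by (rule dist_triangle)
    finally show ?thesis using QyQx Qxp p by (simp add: D_def)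
  qed
  show ?thesis using proj main ps by simp
qed



theorem mainTheorem10:
  fixes g :: "'a::euclidean_space \<Rightarrow> real"
    and f :: "nat \<Rightarrow> 'a \<Rightarrow> real"
    and f' :: "nat \<Rightarrow> 'a \<Rightarrow> 'a"
    and s :: "nat \<Rightarrow> 'a"
    and x :: "nat \<Rightarrow> 'a"
    and T :: nat
    and R Gf Gg \<sigma> \<epsilon> \<eta> \<rho> :: real
  assumes T_pos: "T \<ge> 1"
    and g_convex: "convex_on UNIV g"
    and A1: "R > 0" "{z. g z \<le> 0} \<subseteq> cball 0 R"
    and A2_convex: "\<And>t. t \<in> {1..T} \<Longrightarrow> convex_on UNIV (f t)"
    and A2_grad: "\<And>t z. t \<in> {1..T} \<Longrightarrow> (f t has_derivative (\<lambda>h. inner (f' t z) h)) (at z)"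
    and A2_bound: "Gf > 0" "\<And>t z. t \<in> {1..T} \<Longrightarrow> z \<in> cball 0 R \<Longrightarrow> norm (f' t z) \<le> Gf"
    and A3: "Gg > 0" "\<And>z v. z \<in> cball 0 R \<Longrightarrow> v \<in> subdiff g z \<Longrightarrow> norm v \<le> Gg"
    and A4: "\<sigma> > 0" "\<epsilon> > 0" "{z. g z = - \<epsilon>} \<noteq> {}"
      "\<And>z v. g z = - \<epsilon> \<Longrightarrow> v \<in> subdiff g z \<Longrightarrow> norm v \<ge> \<sigma>"
    and x1: "x 1 \<in> cball 0 R"
    and eta: "\<eta> > 0"
    and rho: "0 \<le> \<rho>" "\<rho> \<le> \<epsilon>"
    and subgrad: "\<And>t. t \<in> {1..T} \<Longrightarrow> s t \<in> subdiff g (x t)"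
    and step: "\<And>t. t \<in> {1..T} \<Longrightarrow> x (Suc t) = polyak_step R \<eta> \<rho> g (s t) (f' t (x t)) (x t)"
  shows "\<forall>t. 1 \<le> t \<and> t < T \<longrightarrow>
      infdist (x (Suc t)) {z. g z \<le> - \<rho>}
        \<le> sqrt (1 - \<sigma>\<^sup>2 / Gg\<^sup>2) * infdist (x t) {z. g z \<le> - \<rho>} + \<eta> * Gf
    \<and> infdist (x (Suc t)) {z. g z \<le> - \<rho>}
        \<le> (1 - \<sigma>\<^sup>2 / Gg\<^sup>2) powr (real t / 2) * infdist (x 1) {z. g z \<le> - \<rho>}
          + \<eta> * Gf / (1 - sqrt (1 - \<sigma>\<^sup>2 / Gg\<^sup>2))"
proof -
  define X' where "X' = {z. g z \<le> - \<rho>}"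
  define q where "q = sqrt (1 - \<sigma>\<^sup>2 / Gg\<^sup>2)"
  define D where "D = (\<lambda>t. infdist (x t) X')"
  define c where "c = \<eta> * Gf"
  have neE: "{z. g z \<le> - \<epsilon>} \<noteq> {}" using A4(3) by (auto intro: eq_refl)
  have Xcl: "closed X'" unfolding X'_def by (rule sublevel_closed[OF g_convex])
  have Xne: "X' \<noteq> {}"
  proof -
    obtain z0 where "g z0 = - \<epsilon>" using A4(3) by auto
    hence "z0 \<in> X'" using rho by (simp add: X'_def)
    thus ?thesis by auto
  qed
  have Xsub: "X' \<subseteq> cball 0 R" using A1(2) rho by (force simp: X'_def)
  have sigGg: "\<sigma> \<le> Gg"
    by (rule sigma_le[OF g_convex neE A4(2) A1 A3(2) A4(4)])
  have ps_in: "polyak_step R \<eta> \<rho> g sv gr xv \<in> cball 0 R" for sv gr xv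
  proof -
    have "closed (cball (0::'a) R)" "cball (0::'a) R \<noteq> {}" using A1(1) by auto
    hence "closest_point (cball (0::'a) R) v \<in> cball 0 R" for v by (rule closest_point_in_set)
    thus ?thesis unfolding polyak_step_def Let_def by presburger
  qed
  have inball: "x t \<in> cball 0 R" if "t \<in> {1..T}" for t
  proof (cases t)
    case 0 thus ?thesis using that by simp
  next
    case (Suc t')
    show ?thesis
    proof (cases "t' = 0")
      case True thus ?thesis using Suc x1 by simp
    next
      case False
      hence "t' \<in> {1..T}" using that Suc by auto
      thus ?thesis using step[of t'] ps_in Suc by simp
    qed
  qed
  have Gg: "Gg > 0" using A3(1) .
  have gam: "0 \<le> 1 - \<sigma>\<^sup>2 / Gg\<^sup>2" "1 - \<sigma>\<^sup>2 / Gg\<^sup>2 < 1"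
    using sigGg A4(1) Gg by (auto simp: field_simps power_mono)
  have q0: "q \<ge> 0" "q < 1" using gam by (auto simp: q_def)
  have c0: "c \<ge> 0" using eta A2_bound(1) by (simp add: c_def)
  have one: "D (Suc t) \<le> q * D t + c" if t: "1 \<le> t" "t < T" for t
  proof -
    have tT: "t \<in> {1..T}" using t by simp
    have "D (Suc t) = infdist (polyak_step R \<eta> \<rho> g (s t) (f' t (x t)) (x t)) X'"
      using step[OF tT] by (simp add: D_def)
    also have "\<dots> \<le> q * D t + c" unfolding q_def D_def c_def
    proof (rule one_step[OF X'_def Xcl Xne Xsub A1(1) subgrad[OF tT] _ _ eta _ A4(1) sigGg])
      show "norm (s t) \<le> Gg" using A3(2)[OF inball[OF tT] subgrad[OF tT]] .
      show "norm (f' t (x t)) \<le> Gf" using A2_bound(2)[OF tT inball[OF tT]] .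
      show "infdist (x t) X' \<le> (g (x t) + \<rho>) / \<sigma>" if "g (x t) > - \<rho>"
        unfolding X'_def by (rule error_bound[OF g_convex neE A4(1) A4(4) rho that])
    qed
    finally show ?thesis .
  qed
  define K where "K = c / (1 - q)"
  have K0: "K \<ge> 0" using c0 q0 by (simp add: K_def)
  have Kq: "K * q + c = K" using q0 by (simp add: K_def field_simps)
  have geo: "D (Suc t) \<le> q ^ t * D 1 + K * (1 - q ^ t)" if "1 \<le> t" "t < T" for t
    using that
  proof (induction t)
    case 0 thus ?case by simp
  next
    case (Suc t)
    show ?case
    proof (cases "t = 0")
      case True
      thus ?thesis using one[of 1] Suc.prems Kq by (simp add: algebra_simps)
    next
      case False
      hence IH: "D (Suc t) \<le> q ^ t * D 1 + K * (1 - q ^ t)" using Suc by simp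
      have "D (Suc (Suc t)) \<le> q * D (Suc t) + c" using one[of "Suc t"] Suc.prems by simp
      also have "\<dots> \<le> q * (q ^ t * D 1 + K * (1 - q ^ t)) + c"
        using IH q0 by (simp add: mult_left_mono)
      also have "\<dots> = q ^ Suc t * D 1 + (K * q + c) - K * q ^ Suc t"
        by (simp add: algebra_simps)
      also have "\<dots> = q ^ Suc t * D 1 + K * (1 - q ^ Suc t)" using Kq by (simp add: algebra_simps)
      finally show ?thesis .
    qed
  qed
  have pw: "(1 - \<sigma>\<^sup>2 / Gg\<^sup>2) powr (real t / 2) = q ^ t" if "t \<ge> 1" for t :: nat
  proof (cases "1 - \<sigma>\<^sup>2 / Gg\<^sup>2 = 0")
    case True
    thus ?thesis using that by (simp add: q_def)
  next
    case False
    hence gp: "1 - \<sigma>\<^sup>2 / Gg\<^sup>2 > 0" using gam(1) by linarith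
    have "q ^ t = ((1 - \<sigma>\<^sup>2 / Gg\<^sup>2) powr (1/2)) ^ t" using gp by (simp add: q_def powr_half_sqrt)
    also have "\<dots> = (1 - \<sigma>\<^sup>2 / Gg\<^sup>2) powr (real t / 2)"
    proof -
      have "((1 - \<sigma>\<^sup>2 / Gg\<^sup>2) powr (1/2)) ^ t = ((1 - \<sigma>\<^sup>2 / Gg\<^sup>2) powr (1/2)) powr (real t)"
        using gp by (intro powr_realpow[symmetric]) (subst powr_gt_zero, linarith)
      also have "\<dots> = (1 - \<sigma>\<^sup>2 / Gg\<^sup>2) powr (real t / 2)" by (simp add: powr_powr)
      finally show ?thesis .
    qed
    finally show ?thesis by simp
  qed
  show ?thesis
  proof (intro allI impI conjI)
    fix t assume t: "1 \<le> t \<and> t < T"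
    show "infdist (x (Suc t)) {z. g z \<le> - \<rho>}
        \<le> sqrt (1 - \<sigma>\<^sup>2 / Gg\<^sup>2) * infdist (x t) {z. g z \<le> - \<rho>} + \<eta> * Gf"
      using one[of t] t by (simp add: D_def X'_def q_def c_def)
    have "D (Suc t) \<le> q ^ t * D 1 + K * (1 - q ^ t)" using geo t by simp
    also have "\<dots> \<le> q ^ t * D 1 + K" using K0 q0 by (simp add: algebra_simps)
    finally show "infdist (x (Suc t)) {z. g z \<le> - \<rho>}
        \<le> (1 - \<sigma>\<^sup>2 / Gg\<^sup>2) powr (real t / 2) * infdist (x 1) {z. g z \<le> - \<rho>}
          + \<eta> * Gf / (1 - sqrt (1 - \<sigma>\<^sup>2 / Gg\<^sup>2))"
      using pw[of t] t by (simp add: D_def X'_def K_def c_def q_def)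
  qed
qed

end
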